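(* Let $g:\mathbb{R}^n\to\mathbb{R}\cup\{+\infty\}$ be a proper closed convex function and let $f:\mathbb{R}^n\to\mathbb{R}$ be convex and differentiable with $\nabla f$ Lipschitz continuous with modulus $L>0$. Let $F=f+g$, and assume $\inf F>-\infty$ and that this infimum is attained. Let $\mathcal X=\{x:0\in\nabla f(x)+\partial g(x)\}$, and suppose: (a) (error bound) for any $\xi\ge\inf F$ there exist $\epsilon>0$ and $\tau>0$ such that $\operatorname{dist}(x,\mathcal X)\le\tau\|\mathrm{Prox}_{\frac1L g}(x-\tfrac1L\nabla f(x))-x\|$ whenever $\|\mathrm{Prox}_{\frac1L g}(x-\tfrac1L\nabla f(x))-x\|<\epsilon$ and $F(x)\le\xi$; (b) there exists $\delta>0$ such that $\|x-y\|\ge\delta$ whenever $x,y\in\mathcal X$ and $F(x)\ne F(y)$. Let $\{x^k\}$ be generated by FISTA with the fixed restart scheme, or by FISTA with both the fixed and the adaptive restart schemes (described in the context). Then: (i) $\{x^k\}$ converges $R$-linearly to a globally optimal solution of $\min F$; (ii) $\{F(x^k)\}$ converges $R$-linearly to the optimal value $\min F$.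
   Context: For a proper closed convex $h$, $\mathrm{Prox}_h(v)=\arg\min_{x\in\mathbb{R}^n}\{h(x)+\tfrac12\|x-v\|^2\}$; $\partial g$ is the convex subdifferential. FISTA: given $x^0\in\operatorname{dom} g$, set $x^{-1}=x^0$, $\theta_{-1}=\theta_0=1$, and for $k=0,1,2,\dots$: $\beta_k=(\theta_{k-1}-1)/\theta_k$, $y^k=x^k+\beta_k(x^k-x^{k-1})$, $x^{k+1}=\mathrm{Prox}_{\frac1L g}(y^k-\tfrac1L\nabla f(y^k))$, $\theta_{k+1}=(1+\sqrt{1+4\theta_k^2})/2$. Fixed restart scheme: for a fixed positive integer $K$, reset $\theta_{k-1}=\theta_k=1$ every $K$ iterations. Adaptive (gradient) restart scheme: reset $\theta_k=\theta_{k+1}=1$ whenever $\langle y^k-x^{k+1},x^{k+1}-x^k\rangle>0$. A sequence converges $R$-linearly to a limit $x^*$ if $\limsup_{k\to\infty}\|x^k-x^*\|^{1/k}<1$. *)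

theory Defs
  imports "HOL-Analysis.Analysis" "HOL-Library.Extended_Real" "HOL-Library.Liminf_Limsup"
begin

text \<open>Extended-real-valued functions g : R^n -> R \<union> {+inf}.  The space R^n is
  modelled by an arbitrary Euclidean space type.\<close>

definition epigraph :: "('a \<Rightarrow> ereal) \<Rightarrow> ('a \<times> real) set" where
  "epigraph g = {(x, t). g x \<le> ereal t}"

definition proper_closed_convex :: "('a::euclidean_space \<Rightarrow> ereal) \<Rightarrow> bool" where
  "proper_closed_convex g \<longleftrightarrow>
     (\<forall>x. g x \<noteq> -\<infinity>) \<and> (\<exists>x. g x \<noteq> \<infinity>) \<and>
     closed (epigraph g) \<and> convex (epigraph g)"

definition prox :: "('a::euclidean_space \<Rightarrow> ereal) \<Rightarrow> 'a \<Rightarrow> 'a" where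
  "prox h v = (SOME x. \<forall>z. h x + ereal (norm (x - v) ^ 2 / 2) \<le> h z + ereal (norm (z - v) ^ 2 / 2))"

definition subdiff :: "('a::euclidean_space \<Rightarrow> ereal) \<Rightarrow> 'a \<Rightarrow> 'a set" where
  "subdiff g x = {v. g x \<noteq> \<infinity> \<and> (\<forall>y. g x + ereal (inner v (y - x)) \<le> g y)}"

text \<open>FISTA with fixed restart (period K) and optionally adaptive (gradient) restart.
  State at iteration k: (x^{k-1}, x^k, theta_{k-1}, theta_k), before the fixed restart
  test at iteration k.\<close>
primrec fista_state :: "real \<Rightarrow> ('a::euclidean_space \<Rightarrow> 'a) \<Rightarrow> ('a \<Rightarrow> ereal) \<Rightarrow> nat \<Rightarrow> bool
    \<Rightarrow> 'a \<Rightarrow> nat \<Rightarrow> 'a \<times> 'a \<times> real \<times> real" where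
  "fista_state L gf g K adaptive x0 0 = (x0, x0, 1, 1)"
| "fista_state L gf g K adaptive x0 (Suc k) =
     (case fista_state L gf g K adaptive x0 k of (xp, xc, tp0, tc0) \<Rightarrow>
       let tp = (if K dvd k then 1 else tp0);
           tc = (if K dvd k then 1 else tc0);
           \<beta> = (tp - 1) / tc;
           y = xc + \<beta> *\<^sub>R (xc - xp);
           xn = prox (\<lambda>z. ereal (1 / L) * g z) (y - (1 / L) *\<^sub>R gf y);
           tn = (1 + sqrt (1 + 4 * tc ^ 2)) / 2
       in if adaptive \<and> inner (y - xn) (xn - xc) > 0 then (xc, xn, 1, 1)
          else (xc, xn, tc, tn))"

definition fista_x :: "real \<Rightarrow> ('a::euclidean_space \<Rightarrow> 'a) \<Rightarrow> ('a \<Rightarrow> ereal) \<Rightarrow> nat \<Rightarrow> bool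
    \<Rightarrow> 'a \<Rightarrow> nat \<Rightarrow> 'a" where
  "fista_x L gf g K adaptive x0 k = fst (snd (fista_state L gf g K adaptive x0 k))"

end

theory Submission
  imports Defs
begin


lemma hd_field: assumes "(f has_derivative (\<lambda>s. s * c)) F" shows "(f has_field_derivative c) F"
proof -
  have "(\<lambda>s. s * c) = (*) c" by (rule ext) simp
  thus ?thesis using assms by (simp add: has_field_derivative_def)
qed

locale fsetup =
  fixes f :: "'a::euclidean_space \<Rightarrow> real" and gf :: "'a \<Rightarrow> 'a"
    and g :: "'a \<Rightarrow> ereal" and L :: real
  assumes g: "proper_closed_convex g"
    and f_convex: "convex_on UNIV f"
    and f_grad: "\<And>x. (f has_derivative (\<lambda>h. inner (gf x) h)) (at x)"
    and L_pos: "L > 0"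
    and f_lip: "\<And>x y. norm (gf x - gf y) \<le> L * norm (x - y)"
begin

definition D where "D = {z. g z \<noteq> \<infinity>}"
definition G where "G z = real_of_ereal (g z)"

lemma g_fin: "z \<in> D \<Longrightarrow> g z = ereal (G z)"
  using g unfolding D_def G_def proper_closed_convex_def
  by (cases "g z") auto

lemma D_ne: "\<exists>z. z \<in> D"
  using g unfolding D_def proper_closed_convex_def by auto

lemma G_convex:
  assumes "a \<in> D" "b \<in> D" "0 \<le> t" "t \<le> 1"
  shows "(1-t) *\<^sub>R a + t *\<^sub>R b \<in> D \<and> G ((1-t) *\<^sub>R a + t *\<^sub>R b) \<le> (1-t) * G a + t * G b"
proof -
  have c: "convex (epigraph g)" using g unfolding proper_closed_convex_def by auto
  have "(a, G a) \<in> epigraph g" "(b, G b) \<in> epigraph g"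
    using g_fin[OF assms(1)] g_fin[OF assms(2)] unfolding epigraph_def by auto
  from convexD[OF c this, of "1-t" t] assms
  have "((1-t) *\<^sub>R a + t *\<^sub>R b, (1-t) * G a + t * G b) \<in> epigraph g" by simp
  hence le: "g ((1-t) *\<^sub>R a + t *\<^sub>R b) \<le> ereal ((1-t) * G a + t * G b)"
    unfolding epigraph_def by simp
  hence "(1-t) *\<^sub>R a + t *\<^sub>R b \<in> D" unfolding D_def by auto
  with le g_fin show ?thesis by auto
qed

lemma G_closed:
  assumes "\<And>n. z n \<in> D" "z \<longlonglongrightarrow> w" "\<And>n. G (z n) \<le> c"
  shows "w \<in> D \<and> G w \<le> c"
proof -
  have cl: "closed (epigraph g)" using g unfolding proper_closed_convex_def by auto
  have "\<And>n. (z n, c) \<in> epigraph g" using assms(1,3) g_fin unfolding epigraph_def by auto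
  moreover have "(\<lambda>n. (z n, c)) \<longlonglongrightarrow> (w, c)" using assms(2) by (intro tendsto_Pair) auto
  ultimately have "(w, c) \<in> epigraph g" using closed_sequentially[OF cl, of "\<lambda>n. (z n, c)"] by simp
  hence le: "g w \<le> ereal c" unfolding epigraph_def by simp
  hence "w \<in> D" unfolding D_def by auto
  with le g_fin show ?thesis by auto
qed

lemma G_closed_ev:
  assumes "\<And>n. z n \<in> D" "z \<longlonglongrightarrow> w" "\<And>n. n \<ge> N \<Longrightarrow> G (z n) \<le> c"
  shows "w \<in> D \<and> G w \<le> c"
proof (rule G_closed[of "\<lambda>n. z (n + N)" w c])
  show "(\<lambda>n. z (n + N)) \<longlonglongrightarrow> w" by (rule LIMSEQ_ignore_initial_segment[OF assms(2)])
qed (use assms in auto)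

lemma f_cont: "continuous_on UNIV f"
  using f_grad has_derivative_continuous continuous_at_imp_continuous_on by blast

lemma tangent: "f y \<ge> f x + inner (gf x) (y - x)"
proof -
  define d where "d = y - x"
  define \<psi> where "\<psi> t = f (x + t *\<^sub>R d)" for t :: real
  have cv: "convex_on UNIV \<psi>"
  proof (rule convex_onI)
    fix t :: real and a b :: real assume "0 < t" "t < 1"
    have "\<psi> ((1-t) * a + t * b) = f ((1-t) *\<^sub>R (x + a *\<^sub>R d) + t *\<^sub>R (x + b *\<^sub>R d))"
      unfolding \<psi>_def by (simp add: algebra_simps)
    also have "\<dots> \<le> (1-t) * \<psi> a + t * \<psi> b"
      unfolding \<psi>_def using \<open>0<t\<close> \<open>t<1\<close> by (intro convex_onD[OF f_convex]) auto
    finally show "\<psi> ((1-t) *\<^sub>R a + t *\<^sub>R b) \<le> (1-t) * \<psi> a + t * \<psi> b" by simp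
  qed simp
  have "((\<lambda>t. x + t *\<^sub>R d) has_derivative (\<lambda>t. t *\<^sub>R d)) (at 0)"
    by (auto intro!: derivative_eq_intros)
  from has_derivative_compose[OF this f_grad[of "x + 0 *\<^sub>R d"]]
  have "(\<psi> has_derivative (\<lambda>t. inner (gf x) (t *\<^sub>R d))) (at 0)"
    unfolding \<psi>_def o_def by simp
  hence "(\<psi> has_field_derivative (inner (gf x) d)) (at 0 within UNIV)"
  proof -
    have "(\<lambda>t. inner (gf x) (t *\<^sub>R d)) = (*) (inner (gf x) d)" by (rule ext) simp
    thus ?thesis using \<open>(\<psi> has_derivative _) _\<close> unfolding has_field_derivative_def by simp
  qed
  from convex_on_imp_above_tangent[OF cv _ _ _ this, of 1]
  have "\<psi> 1 - \<psi> 0 \<ge> inner (gf x) d" by simp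
  thus ?thesis unfolding \<psi>_def d_def by simp
qed

lemma descent: "f y \<le> f x + inner (gf x) (y - x) + L / 2 * norm (y - x) ^ 2"
proof -
  define d where "d = y - x"
  define \<psi> where "\<psi> t = f (x + t *\<^sub>R d) - t * inner (gf x) d - L / 2 * t^2 * norm d ^ 2" for t :: real
  have "\<psi> 1 \<le> \<psi> 0"
  proof (rule DERIV_nonpos_imp_nonincreasing[of 0 1])
    fix t :: real assume t: "0 \<le> t" "t \<le> 1"
    have "((\<lambda>t. x + t *\<^sub>R d) has_derivative (\<lambda>s. s *\<^sub>R d)) (at t)"
      by (auto intro!: derivative_eq_intros)
    from has_derivative_compose[OF this f_grad[of "x + t *\<^sub>R d"]]
    have d1: "((\<lambda>t. f (x + t *\<^sub>R d)) has_derivative (\<lambda>s. s * inner (gf (x + t *\<^sub>R d)) d)) (at t)"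
      unfolding o_def by simp
    have "(\<psi> has_derivative (\<lambda>s. s * inner (gf (x + t *\<^sub>R d)) d - s * inner (gf x) d - s * (L * t * norm d ^ 2))) (at t)"
      unfolding \<psi>_def
      by (rule derivative_eq_intros d1 | simp)+ (auto simp: algebra_simps)
    also have "(\<lambda>s. s * inner (gf (x + t *\<^sub>R d)) d - s * inner (gf x) d - s * (L * t * norm d ^ 2)) = (\<lambda>s. s * (inner (gf (x + t *\<^sub>R d)) d - inner (gf x) d - L * t * norm d ^ 2))"
      by (rule ext) (simp add: algebra_simps)
    finally have "(\<psi> has_field_derivative (inner (gf (x + t *\<^sub>R d)) d - inner (gf x) d - L * t * norm d ^ 2)) (at t)"
      by (rule hd_field)
    moreover have "inner (gf (x + t *\<^sub>R d)) d - inner (gf x) d - L * t * norm d ^ 2 \<le> 0"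
    proof -
      have "inner (gf (x + t *\<^sub>R d)) d - inner (gf x) d = inner (gf (x + t *\<^sub>R d) - gf x) d"
        by (simp add: inner_diff_left)
      also have "\<dots> \<le> norm (gf (x + t *\<^sub>R d) - gf x) * norm d" by (rule norm_cauchy_schwarz)
      also have "\<dots> \<le> (L * norm (t *\<^sub>R d)) * norm d"
        using f_lip[of "x + t *\<^sub>R d" x] by (intro mult_right_mono) auto
      also have "\<dots> = L * t * norm d ^ 2" using t by (simp add: power2_eq_square)
      finally show ?thesis by simp
    qed
    ultimately show "\<exists>y. DERIV \<psi> t :> y \<and> y \<le> 0" by blast
  qed simp
  moreover have "\<psi> 1 = f y - inner (gf x) (y - x) - L / 2 * norm (y - x) ^ 2"
    unfolding \<psi>_def d_def by simp
  moreover have "\<psi> 0 = f x" unfolding \<psi>_def by simp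
  ultimately show ?thesis by linarith
qed

end


lemma aux_lim:
  fixes A c :: real
  assumes "\<And>t. 0 < t \<Longrightarrow> t \<le> 1 \<Longrightarrow> 0 \<le> A + t * c" "c \<ge> 0"
  shows "0 \<le> A"
proof (rule ccontr)
  assume "\<not> 0 \<le> A"
  hence A: "A < 0" by simp
  define t where "t = min 1 (- A / (2 * (c + 1)))"
  have t0: "0 < t" using A assms(2) unfolding t_def by (auto simp: field_simps)
  have t1: "t \<le> 1" unfolding t_def by simp
  have "t * c \<le> (- A / (2 * (c + 1))) * c" unfolding t_def using assms(2) by (intro mult_right_mono) auto
  also have "\<dots> \<le> - A / 2" using A assms(2) by (simp add: field_simps)
  finally have "A + t * c < 0" using A by simp
  with assms(1)[OF t0 t1] show False by simp
qed

lemma norm_sq_expand: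
  fixes x y :: "'a::real_inner"
  shows "norm (x + t *\<^sub>R y) ^ 2 = norm x ^ 2 + 2 * t * inner x y + t ^ 2 * norm y ^ 2"
proof -
  have "norm (x + t *\<^sub>R y) ^ 2 = inner (x + t *\<^sub>R y) (x + t *\<^sub>R y)" by (rule power2_norm_eq_inner)
  also have "\<dots> = inner x x + 2 * t * inner x y + t ^ 2 * inner y y"
    by (simp add: inner_add_left inner_add_right inner_commute power2_eq_square algebra_simps)
  finally show ?thesis by (simp add: power2_norm_eq_inner)
qed

lemma parallelogram_half:
  fixes a b v :: "'a::real_inner"
  shows "norm ((1/2) *\<^sub>R a + (1/2) *\<^sub>R b - v) ^ 2 = (norm (a - v) ^ 2 + norm (b - v) ^ 2) / 2 - norm (a - b) ^ 2 / 4"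
proof -
  have h: "(1/2::real) *\<^sub>R v + (1/2) *\<^sub>R v = v" by (simp flip: scaleR_add_left)
  have e0: "(1/2) *\<^sub>R ((a - v) + (b - v)) = (1/2) *\<^sub>R a + (1/2) *\<^sub>R b - ((1/2) *\<^sub>R v + (1/2) *\<^sub>R v)" by (simp add: algebra_simps)
  have e: "(1/2) *\<^sub>R a + (1/2) *\<^sub>R b - v = (1/2) *\<^sub>R ((a - v) + (b - v))" unfolding e0 h ..
  have e2: "a - b = (a - v) - (b - v)" by simp
  define u w where "u = a - v" "w = b - v"
  have 1: "norm ((1/2) *\<^sub>R (u + w)) ^ 2 = (inner u u + 2 * inner u w + inner w w) / 4"
    unfolding power2_norm_eq_inner by (simp add: inner_add_left inner_add_right inner_commute)
  have 2: "norm (u - w) ^ 2 = inner u u - 2 * inner u w + inner w w"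
    unfolding power2_norm_eq_inner by (simp add: inner_diff_left inner_diff_right inner_commute)
  have 3: "norm u ^ 2 = inner u u" "norm w ^ 2 = inner w w" by (simp_all add: power2_norm_eq_inner)
  have "norm ((1/2) *\<^sub>R (u + w)) ^ 2 = (norm u ^ 2 + norm w ^ 2) / 2 - norm (u - w) ^ 2 / 4"
    unfolding 1 2 3 by (simp add: field_simps)
  thus ?thesis unfolding e e2 u_w_def .
qed

context fsetup
begin

lemma G_lb_ball: "\<exists>M. \<forall>z\<in>D. norm (z - c) \<le> r \<longrightarrow> G z \<ge> - M"
proof (rule ccontr)
  assume "\<not> ?thesis"
  hence "\<forall>n::nat. \<exists>z. z \<in> D \<and> norm (z - c) \<le> r \<and> G z < - real n" by (auto simp: not_le)
  from choice[OF this] obtain z where zz: "\<forall>n. z n \<in> D \<and> norm (z n - c) \<le> r \<and> G (z n) < - real n"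
    by blast
  hence z: "\<And>n. z n \<in> D" "\<And>n. norm (z n - c) \<le> r" "\<And>n. G (z n) < - real n" by auto
  have "\<forall>n. z n \<in> cball c r" using z(2) by (simp add: dist_norm norm_minus_commute)
  from seq_compactE[OF compact_imp_seq_compact[OF compact_cball[of c r]] this]
  obtain l \<sigma> where l: "l \<in> cball c r" "strict_mono \<sigma>" "(z \<circ> \<sigma>) \<longlonglongrightarrow> l"
    by blast
  define N where "N = nat (\<lceil>- G l\<rceil> + 1)"
  have "l \<in> D \<and> G l \<le> - real N"
  proof (rule G_closed_ev[of "z \<circ> \<sigma>" l N])
    fix n assume "n \<ge> N"
    have "n \<le> \<sigma> n" using l(2) by (rule strict_mono_imp_increasing)
    thus "G ((z \<circ> \<sigma>) n) \<le> - real N" using z(3)[of "\<sigma> n"] \<open>n \<ge> N\<close> by simp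
  next
    show "\<And>n. (z \<circ> \<sigma>) n \<in> D" using z(1) by simp
  qed (rule l(3))
  moreover have "real N > - G l" unfolding N_def by linarith
  ultimately show False by simp
qed

lemma G_linear_lb: "\<exists>z0 B. z0 \<in> D \<and> B \<ge> 0 \<and> (\<forall>z\<in>D. G z \<ge> - B - B * norm (z - z0))"
proof -
  obtain z0 where z0: "z0 \<in> D" using D_ne by blast
  obtain M where M: "\<And>z. z \<in> D \<Longrightarrow> norm (z - z0) \<le> 1 \<Longrightarrow> G z \<ge> - M" using G_lb_ball[of z0 1] by blast
  define B where "B = \<bar>M\<bar> + \<bar>G z0\<bar>"
  have "G z \<ge> - B - B * norm (z - z0)" if z: "z \<in> D" for z
  proof (cases "norm (z - z0) \<le> 1")
    case True
    have "B * norm (z - z0) \<ge> 0" unfolding B_def by simp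
    moreover have "- M \<ge> - B" unfolding B_def by simp
    ultimately show ?thesis using M[OF z True] by linarith
  next
    case False
    define n where "n = norm (z - z0)"
    define t where "t = 1 / n"
    have n1: "n > 1" using False n_def by simp
    have t: "0 \<le> t" "t \<le> 1" using n1 unfolding t_def by auto
    define w where "w = (1 - t) *\<^sub>R z0 + t *\<^sub>R z"
    from G_convex[OF z0 z t] have w: "w \<in> D" "G w \<le> (1 - t) * G z0 + t * G z" unfolding w_def by auto
    have "w - z0 = t *\<^sub>R (z - z0)" unfolding w_def by (simp add: algebra_simps)
    moreover have "z - z0 \<noteq> 0" using n1 n_def by auto
    ultimately have "norm (w - z0) = 1" using n1 unfolding t_def n_def by simp
    hence "G w \<ge> - M" using M w by simp
    hence "- M \<le> (1 - t) * G z0 + t * G z" using w by simp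
    hence "n * (- M) \<le> n * ((1 - t) * G z0 + t * G z)" using n1 by (intro mult_left_mono) auto
    also have "\<dots> = (n - 1) * G z0 + G z" using n1 unfolding t_def by (simp add: field_simps)
    finally have "G z \<ge> - n * M - (n - 1) * G z0" by simp
    moreover have "- n * M - (n - 1) * G z0 \<ge> - B - B * n"
    proof -
      have "- n * M \<ge> - n * \<bar>M\<bar>" using n1 by (simp add: mult_left_mono)
      moreover have "- (n - 1) * G z0 \<ge> - (n + 1) * \<bar>G z0\<bar>"
      proof -
        have "(n - 1) * G z0 \<le> (n - 1) * \<bar>G z0\<bar>" using n1 by (intro mult_left_mono) auto
        moreover have "(n - 1) * \<bar>G z0\<bar> \<le> (n + 1) * \<bar>G z0\<bar>" by (intro mult_right_mono) auto
        ultimately show ?thesis by (simp add: algebra_simps)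
      qed
      ultimately show ?thesis unfolding B_def by (simp add: algebra_simps)
    qed
    ultimately show ?thesis unfolding n_def by simp
  qed
  moreover have "B \<ge> 0" unfolding B_def by simp
  ultimately show ?thesis using z0 by blast
qed

definition phi where "phi v z = G z / L + norm (z - v) ^ 2 / 2"

lemma prox_exists: "\<exists>p\<in>D. \<forall>z\<in>D. phi v p \<le> phi v z"
proof -
  obtain z0 B where zB: "z0 \<in> D" "B \<ge> 0" "\<And>z. z \<in> D \<Longrightarrow> G z \<ge> - B - B * norm (z - z0)"
    using G_linear_lb by blast
  define c where "c = - (B + B * norm (v - z0)) / L - ((B / L) * (B / L)) / 2"
  have lb: "phi v z \<ge> c" if z: "z \<in> D" for z
  proof -
    define sn where "sn = norm (z - v)"
    have "norm (z - z0) \<le> sn + norm (v - z0)" unfolding sn_def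
      using norm_triangle_ineq[of "z - v" "v - z0"] by simp
    hence "G z \<ge> - B - B * (sn + norm (v - z0))" using zB(3)[OF z] zB(2)
      by (smt (verit) mult_left_mono)
    hence "G z / L \<ge> (- B - B * (sn + norm (v - z0))) / L" using L_pos by (simp add: divide_right_mono)
    moreover have "(- B - B * (sn + norm (v - z0))) / L = - (B + B * norm (v - z0)) / L - (B / L) * sn"
      using L_pos by (simp add: field_simps)
    moreover have "sn * sn / 2 - (B / L) * sn \<ge> - ((B / L) * (B / L)) / 2"
    proof -
      have "0 \<le> (sn - B / L) * (sn - B / L)" by simp
      thus ?thesis by (simp add: algebra_simps)
    qed
    ultimately show ?thesis unfolding phi_def c_def sn_def by (simp add: power2_eq_square)
  qed
  define m where "m = Inf (phi v ` D)"
  have bdd: "bdd_below (phi v ` D)" unfolding bdd_below_def using lb by blast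
  have Dne: "phi v ` D \<noteq> {}" using zB(1) by auto
  have m_le: "m \<le> phi v z" if "z \<in> D" for z
    unfolding m_def using bdd that by (simp add: cInf_lower)
  have "\<forall>n::nat. \<exists>z. z \<in> D \<and> phi v z < m + 1 / (real n + 1)"
  proof
    fix n :: nat
    have "Inf (phi v ` D) < m + 1 / (real n + 1)" unfolding m_def by simp
    from cInf_lessD[OF Dne this] show "\<exists>z. z \<in> D \<and> phi v z < m + 1 / (real n + 1)" by auto
  qed
  from choice[OF this] obtain zs where zs: "\<forall>n. zs n \<in> D \<and> phi v (zs n) < m + 1 / (real n + 1)"
    by blast
  have mid: "norm (zs n - zs k) ^ 2 \<le> 4 * (1 / (real n + 1) + 1 / (real k + 1))" for n k
  proof -
    define w where "w = (1 - 1/2) *\<^sub>R zs n + (1/2) *\<^sub>R zs k"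
    have hw: "w \<in> D" "G w \<le> (1 - 1/2) * G (zs n) + (1/2) * G (zs k)"
      using G_convex[of "zs n" "zs k" "1/2"] zs unfolding w_def by auto
    have "norm (w - v) ^ 2 = (norm (zs n - v) ^ 2 + norm (zs k - v) ^ 2) / 2 - norm (zs n - zs k) ^ 2 / 4"
      unfolding w_def using parallelogram_half[of "zs n" "zs k" v] by simp
    moreover have "G w / L \<le> (G (zs n) / L + G (zs k) / L) / 2"
    proof -
      have "G w \<le> (G (zs n) + G (zs k)) / 2" using hw(2) by simp
      hence "G w / L \<le> ((G (zs n) + G (zs k)) / 2) / L" using L_pos by (rule divide_right_mono[OF _ less_imp_le])
      also have "\<dots> = (G (zs n) / L + G (zs k) / L) / 2" by (simp add: add_divide_distrib)
      finally show ?thesis .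
    qed
    moreover have "\<And>a b c d e f g :: real. a = (b+c)/2 - d/4 \<Longrightarrow> e \<le> (f+g)/2 \<Longrightarrow> e + a/2 \<le> (f + b/2 + (g + c/2))/2 - d/8"
      by argo
    ultimately have "phi v w \<le> (phi v (zs n) + phi v (zs k)) / 2 - norm (zs n - zs k) ^ 2 / 8"
      unfolding phi_def by blast
    moreover have "m \<le> phi v w" using m_le hw(1) by simp
    moreover have "phi v (zs n) < m + 1 / (real n + 1)" "phi v (zs k) < m + 1 / (real k + 1)" using zs by auto
    ultimately show ?thesis by argo
  qed
  have "Cauchy zs"
  proof (rule CauchyI)
    fix e :: real assume e: "e > 0"
    obtain N :: nat where N: "8 / e ^ 2 < real N" using reals_Archimedean2 by blast
    show "\<exists>M. \<forall>m\<ge>M. \<forall>n\<ge>M. norm (zs m - zs n) < e"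
    proof (intro exI allI impI)
      fix a b assume ab: "N \<le> a" "N \<le> b"
      have "1 / (real a + 1) \<le> 1 / (real N + 1)" "1 / (real b + 1) \<le> 1 / (real N + 1)"
        using ab by (auto simp: divide_left_mono)
      hence "norm (zs a - zs b) ^ 2 \<le> 8 / (real N + 1)" using mid[of a b] by simp
      also have "\<dots> < e ^ 2"
      proof -
        have "8 < real N * e ^ 2" using N e by (simp add: field_simps)
        moreover have "0 < e ^ 2" using e by simp
        ultimately have "8 < (real N + 1) * e ^ 2" unfolding distrib_right by argo
        thus ?thesis by (simp add: field_simps)
      qed
      finally show "norm (zs a - zs b) < e" using e by (simp add: power_less_imp_less_base)
    qed
  qed
  then obtain p where p: "zs \<longlonglongrightarrow> p" using Cauchy_convergent_iff convergent_def by blast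
  have peps: "p \<in> D \<and> phi v p \<le> m + 2 * e" if e: "e > 0" for e
  proof -
    have "(\<lambda>n. norm (zs n - v) ^ 2 / 2) \<longlonglongrightarrow> norm (p - v) ^ 2 / 2"
      by (intro tendsto_intros p) simp
    from order_tendstoD(1)[OF this, of "norm (p - v) ^ 2 / 2 - e"]
    have ev1: "eventually (\<lambda>n. norm (zs n - v) ^ 2 / 2 > norm (p - v) ^ 2 / 2 - e) sequentially"
      using e by simp
    have "(\<lambda>n. 1 / (real n + 1)) \<longlonglongrightarrow> 0"
    proof -
      have "(\<lambda>n. 1 / (real n + 1)) = (\<lambda>n. inverse (real (Suc n)))" by (rule ext) (simp add: inverse_eq_divide)
      thus ?thesis using LIMSEQ_inverse_real_of_nat by simp
    qed
    from order_tendstoD(2)[OF this, of e]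
    have ev2: "eventually (\<lambda>n. 1 / (real n + 1) < e) sequentially"
      using e by simp
    from eventually_conj[OF ev1 ev2] obtain N where
      N: "\<And>n. n \<ge> N \<Longrightarrow> norm (zs n - v) ^ 2 / 2 > norm (p - v) ^ 2 / 2 - e \<and> 1 / (real n + 1) < e"
      unfolding eventually_sequentially by blast
    have "p \<in> D \<and> G p \<le> L * (m + 2 * e - norm (p - v) ^ 2 / 2)"
    proof (rule G_closed_ev[of zs p N])
      fix n assume n: "n \<ge> N"
      have "G (zs n) / L + norm (zs n - v) ^ 2 / 2 < m + 1 / (real n + 1)" using zs unfolding phi_def by auto
      hence "G (zs n) / L \<le> m + 2 * e - norm (p - v) ^ 2 / 2" using N[OF n] by linarith
      thus "G (zs n) \<le> L * (m + 2 * e - norm (p - v) ^ 2 / 2)" using L_pos by (simp add: field_simps)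
    qed (use zs p in auto)
    thus ?thesis unfolding phi_def using L_pos by (simp add: field_simps)
  qed
  have pD: "p \<in> D" using peps[of 1] by simp
  have "phi v p \<le> m"
  proof (rule field_le_epsilon)
    fix e :: real assume "e > 0"
    thus "phi v p \<le> m + e" using peps[of "e/2"] by simp
  qed
  with pD m_le show ?thesis by force
qed

end


context fsetup
begin

definition h where "h z = ereal (1 / L) * g z"

lemma h_D: "z \<in> D \<Longrightarrow> h z = ereal (G z / L)"
  unfolding h_def using g_fin by simp

lemma h_notD: "z \<notin> D \<Longrightarrow> h z = \<infinity>"
  unfolding h_def D_def using L_pos by simp

lemma prox_char:
  shows "prox h v \<in> D \<and> (\<forall>z\<in>D. phi v (prox h v) \<le> phi v z)"
proof -
  obtain p0 where p0: "p0 \<in> D" "\<And>z. z \<in> D \<Longrightarrow> phi v p0 \<le> phi v z" using prox_exists[of v] by blast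
  have "\<forall>z. h p0 + ereal (norm (p0 - v) ^ 2 / 2) \<le> h z + ereal (norm (z - v) ^ 2 / 2)"
  proof
    fix z show "h p0 + ereal (norm (p0 - v) ^ 2 / 2) \<le> h z + ereal (norm (z - v) ^ 2 / 2)"
    proof (cases "z \<in> D")
      case True thus ?thesis using p0 h_D[OF True] h_D[OF p0(1)] unfolding phi_def by simp
    next
      case False thus ?thesis using h_notD by simp
    qed
  qed
  hence P: "\<forall>z. h (prox h v) + ereal (norm (prox h v - v) ^ 2 / 2) \<le> h z + ereal (norm (z - v) ^ 2 / 2)"
    unfolding prox_def by (rule someI[where P = "\<lambda>x. \<forall>z. h x + ereal (norm (x - v) ^ 2 / 2) \<le> h z + ereal (norm (z - v) ^ 2 / 2)"])
  have pD: "prox h v \<in> D"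
  proof (rule ccontr)
    assume "prox h v \<notin> D"
    hence "h (prox h v) = \<infinity>" by (rule h_notD)
    with P[rule_format, of p0] h_D[OF p0(1)] show False by simp
  qed
  moreover have "phi v (prox h v) \<le> phi v z" if z: "z \<in> D" for z
    using P[rule_format, of z] h_D[OF z] h_D[OF pD] unfolding phi_def by simp
  ultimately show ?thesis by blast
qed

lemma prox_vi:
  assumes z: "z \<in> D"
  shows "G z / L \<ge> G (prox h v) / L + inner (v - prox h v) (z - prox h v)"
proof -
  define p where "p = prox h v"
  have pD: "p \<in> D" and pmin: "\<And>z. z \<in> D \<Longrightarrow> phi v p \<le> phi v z" using prox_char[of v] unfolding p_def by auto
  define A where "A = G z / L - G p / L - inner (v - p) (z - p)"
  have "0 \<le> A + t * (norm (z - p) ^ 2 / 2)" if t: "0 < t" "t \<le> 1" for t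
  proof -
    define zt where "zt = (1 - t) *\<^sub>R p + t *\<^sub>R z"
    have c: "zt \<in> D" "G zt \<le> (1 - t) * G p + t * G z" using G_convex[OF pD z] t unfolding zt_def by auto
    have zt_eq: "zt - v = (p - v) + t *\<^sub>R (z - p)" unfolding zt_def by (simp add: algebra_simps)
    have nrm: "norm (zt - v) ^ 2 = norm (p - v) ^ 2 + 2 * t * inner (p - v) (z - p) + t ^ 2 * norm (z - p) ^ 2"
      unfolding zt_eq by (rule norm_sq_expand)
    have Gd: "G zt / L \<le> ((1 - t) * G p + t * G z) / L" using c(2) L_pos by (simp add: divide_right_mono)
    have "phi v p \<le> phi v zt" using pmin c(1) by simp
    hence "G p / L + norm (p - v) ^ 2 / 2 \<le> G zt / L + norm (zt - v) ^ 2 / 2" unfolding phi_def .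
    hence "0 \<le> ((1 - t) * G p + t * G z) / L - G p / L + t * inner (p - v) (z - p) + t ^ 2 * norm (z - p) ^ 2 / 2"
      using Gd nrm by argo
    also have "\<dots> = t * (A + t * (norm (z - p) ^ 2 / 2))"
      unfolding A_def using L_pos by (simp add: field_simps inner_diff_left inner_diff_right power2_eq_square)
    finally show ?thesis using t by (simp add: zero_le_mult_iff)
  qed
  hence "0 \<le> A" by (intro aux_lim[of A "norm (z - p) ^ 2 / 2"]) auto
  thus ?thesis unfolding A_def p_def by simp
qed

definition T where "T u = prox h (u - (1 / L) *\<^sub>R gf u)"

lemma T_D: "T u \<in> D"
  unfolding T_def using prox_char by blast

lemma key:
  assumes z: "z \<in> D"
  shows "f z + G z - (f (T y) + G (T y)) \<ge> L / 2 * norm (T y - y) ^ 2 + L * inner (y - z) (T y - y)"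
proof -
  define p where "p = T y"
  define v where "v = y - (1 / L) *\<^sub>R gf y"
  have vi: "G z / L \<ge> G p / L + inner (v - p) (z - p)"
    using prox_vi[OF z, of v] unfolding p_def T_def v_def by simp
  hence "L * (G p / L + inner (v - p) (z - p)) \<le> L * (G z / L)"
    using L_pos by (intro mult_left_mono) auto
  hence vi2: "G z \<ge> G p + L * inner (v - p) (z - p)"
    using L_pos by (simp add: distrib_left)
  have e1: "L * inner (v - p) (z - p) = L * inner (y - p) (z - p) - inner (gf y) (z - p)"
    unfolding v_def using L_pos by (simp add: inner_diff_left algebra_simps)
  have d: "f p \<le> f y + inner (gf y) (p - y) + L / 2 * norm (p - y) ^ 2" by (rule descent)
  have tg: "f z \<ge> f y + inner (gf y) (z - y)" by (rule tangent)
  have e4: "inner (gf y) (z - y) - inner (gf y) (p - y) - inner (gf y) (z - p) = 0"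
    by (simp add: inner_diff_right)
  have e5: "inner (y - p) (z - p) = inner (y - z) (p - y) + norm (p - y) ^ 2"
    unfolding power2_norm_eq_inner by (simp add: inner_diff_left inner_diff_right inner_commute)
  have e5': "L * inner (y - p) (z - p) = L * inner (y - z) (p - y) + L * norm (p - y) ^ 2"
    unfolding e5 by (simp add: distrib_left)
  have e6: "L / 2 * norm (p - y) ^ 2 = (L * norm (p - y) ^ 2) / 2" by simp
  have "f z + G z - (f p + G p) \<ge> L / 2 * norm (p - y) ^ 2 + L * inner (y - z) (p - y)"
    using vi2 e1 d tg e4 e5' e6 by argo
  thus ?thesis unfolding p_def by simp
qed

lemma T_lip: "norm (T u - T w) \<le> 2 * norm (u - w)"
proof -
  define v1 v2 where "v1 = u - (1 / L) *\<^sub>R gf u" "v2 = w - (1 / L) *\<^sub>R gf w"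
  define p1 p2 where "p1 = T u" "p2 = T w"
  have a: "G p2 / L \<ge> G p1 / L + inner (v1 - p1) (p2 - p1)"
    using prox_vi[OF T_D[of w], of v1] unfolding p1_p2_def T_def v1_v2_def by simp
  have b: "G p1 / L \<ge> G p2 / L + inner (v2 - p2) (p1 - p2)"
    using prox_vi[OF T_D[of u], of v2] unfolding p1_p2_def T_def v1_v2_def by simp
  have "inner (v1 - p1) (p2 - p1) + inner (v2 - p2) (p1 - p2) = norm (p1 - p2) ^ 2 - inner (v1 - v2) (p1 - p2)"
    unfolding power2_norm_eq_inner by (simp add: inner_diff_left inner_diff_right inner_commute)
  hence n2: "norm (p1 - p2) ^ 2 \<le> inner (v1 - v2) (p1 - p2)" using a b by argo
  also have "\<dots> \<le> norm (v1 - v2) * norm (p1 - p2)" by (rule norm_cauchy_schwarz)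
  finally have n1: "norm (p1 - p2) \<le> norm (v1 - v2)"
    by (cases "norm (p1 - p2) = 0") (auto simp: power2_eq_square)
  have "v1 - v2 = (u - w) - (1 / L) *\<^sub>R (gf u - gf w)" unfolding v1_v2_def by (simp add: algebra_simps)
  hence "norm (v1 - v2) \<le> norm (u - w) + norm ((1 / L) *\<^sub>R (gf u - gf w))"
    by (simp only: norm_triangle_ineq4)
  also have "norm ((1 / L) *\<^sub>R (gf u - gf w)) \<le> norm (u - w)"
  proof -
    have "norm ((1 / L) *\<^sub>R (gf u - gf w)) = norm (gf u - gf w) / L" using L_pos by simp
    also have "\<dots> \<le> (L * norm (u - w)) / L" using f_lip[of u w] L_pos by (intro divide_right_mono) auto
    also have "\<dots> = norm (u - w)" using L_pos by simp
    finally show ?thesis .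
  qed
  finally show ?thesis using n1 unfolding p1_p2_def by simp
qed

lemma stat_imp_min:
  assumes "- gf z \<in> subdiff g z" "y \<in> D"
  shows "z \<in> D" "f z + G z \<le> f y + G y"
proof -
  from assms(1) have zD: "z \<in> D" and sd: "\<And>y. g z + ereal (inner (- gf z) (y - z)) \<le> g y"
    unfolding subdiff_def D_def by auto
  show "z \<in> D" by (rule zD)
  have "G z + inner (- gf z) (y - z) \<le> G y" using sd[of y] g_fin[OF zD] g_fin[OF assms(2)] by simp
  moreover have "f y \<ge> f z + inner (gf z) (y - z)" by (rule tangent)
  ultimately show "f z + G z \<le> f y + G y" by simp
qed

lemma min_imp_stat:
  assumes zD: "z \<in> D" and zmin: "\<And>y. y \<in> D \<Longrightarrow> f z + G z \<le> f y + G y"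
  shows "- gf z \<in> subdiff g z"
  unfolding subdiff_def
proof (intro CollectI conjI allI)
  show "g z \<noteq> \<infinity>" using zD unfolding D_def by simp
  fix y
  show "g z + ereal (inner (- gf z) (y - z)) \<le> g y"
  proof (cases "y \<in> D")
    case False thus ?thesis unfolding D_def by simp
  next
    case yD: True
    define A where "A = inner (gf z) (y - z) + G y - G z"
    have "0 \<le> A + t * (L / 2 * norm (y - z) ^ 2)" if t: "0 < t" "t \<le> 1" for t
    proof -
      define zt where "zt = (1 - t) *\<^sub>R z + t *\<^sub>R y"
      have c: "zt \<in> D" "G zt \<le> (1 - t) * G z + t * G y" using G_convex[OF zD yD] t unfolding zt_def by auto
      have ztz: "zt - z = t *\<^sub>R (y - z)" unfolding zt_def by (simp add: algebra_simps)
      have d: "f zt \<le> f z + inner (gf z) (zt - z) + L / 2 * norm (zt - z) ^ 2" by (rule descent)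
      have nz: "norm (zt - z) = t * norm (y - z)" using t unfolding ztz by simp
      have ip: "inner (gf z) (zt - z) = t * inner (gf z) (y - z)" unfolding ztz by simp
      have d2: "f zt \<le> f z + t * inner (gf z) (y - z) + t ^ 2 * (L / 2 * norm (y - z) ^ 2)"
        using d unfolding nz ip by (simp add: power_mult_distrib algebra_simps)
      have "f z + G z \<le> f zt + G zt" using zmin[OF c(1)] .
      hence "0 \<le> t * A + t ^ 2 * (L / 2 * norm (y - z) ^ 2)"
        using d2 c(2) unfolding A_def by (simp add: algebra_simps)
      also have "\<dots> = t * (A + t * (L / 2 * norm (y - z) ^ 2))" by (simp add: algebra_simps power2_eq_square)
      finally show ?thesis using t by (simp add: zero_le_mult_iff)
    qed
    hence "0 \<le> A" using L_pos by (intro aux_lim[of A "L / 2 * norm (y - z) ^ 2"]) auto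
    thus ?thesis using g_fin[OF zD] g_fin[OF yD] unfolding A_def by simp
  qed
qed

end


locale fista_loc = fsetup f gf g L for f :: "'a::euclidean_space \<Rightarrow> real" and gf g L +
  fixes K :: nat and adaptive :: bool and x0 :: 'a
  assumes K_pos: "K > 0" and x0_dom: "g x0 \<noteq> \<infinity>"
begin

definition st where "st k = fista_state L gf g K adaptive x0 k"
definition xk where "xk k = fst (snd (st k))"
definition xpk where "xpk k = fst (st k)"
definition tpk where "tpk k = fst (snd (snd (st k)))"
definition tck where "tck k = snd (snd (snd (st k)))"
definition tpe where "tpe k = (if K dvd k then 1 else tpk k)"
definition tce where "tce k = (if K dvd k then 1 else tck k)"
definition bet where "bet k = (tpe k - 1) / tce k"
definition yk where "yk k = xk k + bet k *\<^sub>R (xk k - xpk k)"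

lemma xk_eq: "fista_x L gf g K adaptive x0 k = xk k"
  unfolding fista_x_def xk_def st_def ..

lemma h_eq: "(\<lambda>z. ereal (1 / L) * g z) = h"
  by (rule ext) (simp add: h_def)

lemma st0: "xk 0 = x0" "xpk 0 = x0" "tpk 0 = 1" "tck 0 = 1"
  unfolding xk_def xpk_def tpk_def tck_def st_def by simp_all

lemma st_step:
  "xpk (Suc k) = xk k \<and> xk (Suc k) = T (yk k) \<and>
   ((tpk (Suc k) = 1 \<and> tck (Suc k) = 1) \<or>
    (tpk (Suc k) = tce k \<and> tck (Suc k) = (1 + sqrt (1 + 4 * tce k ^ 2)) / 2))"
proof -
  obtain a b c d where abcd: "st k = (a, b, c, d)" by (cases "st k") auto
  hence abcd': "fista_state L gf g K adaptive x0 k = (a, b, c, d)" unfolding st_def .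
  show ?thesis
    unfolding yk_def bet_def tpe_def tce_def xk_def xpk_def tpk_def tck_def st_def
    using abcd' by (cases adaptive) (simp_all add: Let_def h_eq T_def[symmetric])
qed

lemma tn_bounds:
  fixes c :: real assumes "c \<ge> 1"
  shows "c \<le> (1 + sqrt (1 + 4 * c ^ 2)) / 2" "(1 + sqrt (1 + 4 * c ^ 2)) / 2 \<le> 1 + c"
proof -
  have "2 * c \<le> sqrt (1 + 4 * c ^ 2)"
    using assms by (intro real_le_rsqrt) (simp add: power2_eq_square algebra_simps)
  thus "c \<le> (1 + sqrt (1 + 4 * c ^ 2)) / 2" by simp
  have "1 + 4 * c ^ 2 \<le> (1 + 2 * c) ^ 2" using assms by (simp add: power2_eq_square algebra_simps)
  hence "sqrt (1 + 4 * c ^ 2) \<le> sqrt ((1 + 2 * c) ^ 2)" by (rule real_sqrt_le_mono)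
  hence "sqrt (1 + 4 * c ^ 2) \<le> 1 + 2 * c" using assms by simp
  thus "(1 + sqrt (1 + 4 * c ^ 2)) / 2 \<le> 1 + c" by simp
qed

lemma t_inv: "1 \<le> tpk k \<and> tpk k \<le> tck k \<and> (\<not> K dvd k \<longrightarrow> tck k \<le> 1 + real (k mod K))"
proof (induction k)
  case 0 thus ?case using st0 by simp
next
  case (Suc k)
  have te: "1 \<le> tpe k" "tpe k \<le> tce k" "tce k \<le> 1 + real (k mod K)"
    using Suc unfolding tpe_def tce_def by auto
  have smod: "\<not> K dvd Suc k \<Longrightarrow> Suc k mod K = Suc (k mod K)"
    by (metis dvd_eq_mod_eq_0 mod_Suc)
  from st_step[of k] show ?case
  proof (elim conjE disjE)
    assume "tpk (Suc k) = 1" "tck (Suc k) = 1" thus ?thesis by simp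
  next
    assume a: "tpk (Suc k) = tce k" "tck (Suc k) = (1 + sqrt (1 + 4 * tce k ^ 2)) / 2"
    have "1 \<le> tce k" using te by simp
    from tn_bounds[OF this] a te smod show ?thesis by auto
  qed
qed

definition bbar where "bbar = 1 - 1 / real K"

lemma bet_bounds: "0 \<le> bet k" "bet k \<le> bbar"
proof -
  have te: "1 \<le> tpe k" "tpe k \<le> tce k" "tce k \<le> 1 + real (k mod K)"
    using t_inv[of k] unfolding tpe_def tce_def by auto
  have "k mod K < K" using K_pos by simp
  hence tK: "tce k \<le> real K" using te(3) by linarith
  show "0 \<le> bet k" unfolding bet_def using te by simp
  have "bet k \<le> (tce k - 1) / tce k" unfolding bet_def using te by (simp add: divide_right_mono)
  also have "\<dots> = 1 - 1 / tce k" using te by (simp add: field_simps)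
  also have "\<dots> \<le> 1 - 1 / real K" using te tK by (simp add: frac_le)
  finally show "bet k \<le> bbar" unfolding bbar_def .
qed

lemma bbar_bounds: "0 \<le> bbar" "bbar < 1"
  unfolding bbar_def using K_pos by auto

end


context fsetup begin
definition Fv where "Fv z = f z + G z"
end

locale fista_opt = fista_loc f gf g L K adaptive x0
  for f :: "'a::euclidean_space \<Rightarrow> real" and gf g L K adaptive x0 +
  fixes xm :: 'a
  assumes xm_dom: "g xm \<noteq> \<infinity>"
    and xm_min: "\<And>z. g z \<noteq> \<infinity> \<Longrightarrow> f xm + real_of_ereal (g xm) \<le> f z + real_of_ereal (g z)"
begin

definition Fs where "Fs = Fv xm"
definition Xs where "Xs = {z. - gf z \<in> subdiff g z}"
definition ak where "ak k = norm (xk k - xpk k)"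
definition ek where "ek k = Fv (xk k) - Fs + L / 2 * ak k ^ 2"

lemma xmD: "xm \<in> D" using xm_dom unfolding D_def by simp

lemma Fs_le: "z \<in> D \<Longrightarrow> Fs \<le> Fv z"
  using xm_min[of z] unfolding Fs_def Fv_def G_def D_def by simp

lemma X_char: "z \<in> Xs \<longleftrightarrow> z \<in> D \<and> Fv z = Fs"
proof
  assume "z \<in> Xs"
  hence "- gf z \<in> subdiff g z" unfolding Xs_def by simp
  from stat_imp_min[OF this xmD] have "z \<in> D" "Fv z \<le> Fs" unfolding Fv_def Fs_def by auto
  with Fs_le show "z \<in> D \<and> Fv z = Fs" by force
next
  assume "z \<in> D \<and> Fv z = Fs"
  hence "z \<in> D" "\<And>y. y \<in> D \<Longrightarrow> f z + G z \<le> f y + G y" using Fs_le unfolding Fv_def by auto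
  from min_imp_stat[OF this] show "z \<in> Xs" unfolding Xs_def by simp
qed

lemma X_ne: "xm \<in> Xs" using X_char xmD Fs_def by simp

lemma X_closed: "closed Xs"
  unfolding closed_sequential_limits
proof (intro allI impI)
  fix zs l assume a: "(\<forall>n. zs n \<in> Xs) \<and> zs \<longlonglongrightarrow> l"
  hence l: "zs \<longlonglongrightarrow> l" by simp
  have zz: "zs n \<in> D \<and> Fv (zs n) = Fs" for n using a X_char by blast
  hence zD: "\<And>n. zs n \<in> D" and zF: "\<And>n. Fv (zs n) = Fs" by auto
  have fl: "(\<lambda>n. f (zs n)) \<longlonglongrightarrow> f l"
    by (rule isCont_tendsto_compose[OF has_derivative_continuous[OF f_grad] l])
  have le: "l \<in> D \<and> G l \<le> Fs - f l + e" if e: "e > 0" for e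
  proof -
    from order_tendstoD(1)[OF fl, of "f l - e"] e obtain N where N: "\<And>n. n \<ge> N \<Longrightarrow> f (zs n) > f l - e"
      unfolding eventually_sequentially by auto
    show ?thesis
    proof (rule G_closed_ev[OF zD l, of N])
      fix n assume "n \<ge> N"
      thus "G (zs n) \<le> Fs - f l + e" using N[of n] zF[of n] unfolding Fv_def by linarith
    qed
  qed
  have lD: "l \<in> D" using le[of 1] by simp
  have "Fv l \<le> Fs"
  proof (rule field_le_epsilon)
    fix e :: real assume "e > 0"
    thus "Fv l \<le> Fs + e" using le[of e] unfolding Fv_def by simp
  qed
  with Fs_le[OF lD] lD show "l \<in> Xs" using X_char by force
qed

lemma xk_D: "xk k \<in> D"
  by (cases k) (use st0 x0_dom st_step T_D in \<open>auto simp: D_def\<close>)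

lemma ak0: "ak 0 = 0" unfolding ak_def using st0 by simp

lemma yx: "norm (yk k - xk k) = bet k * ak k" "norm (yk k - xk k) \<le> ak k"
proof -
  show "norm (yk k - xk k) = bet k * ak k" unfolding yk_def ak_def using bet_bounds(1)[of k] by simp
  moreover have "bet k * ak k \<le> 1 * ak k"
    using bet_bounds[of k] bbar_bounds unfolding ak_def by (intro mult_right_mono) auto
  ultimately show "norm (yk k - xk k) \<le> ak k" by simp
qed

lemma ak_Suc: "ak (Suc k) = norm (xk (Suc k) - xk k)" unfolding ak_def using st_step by simp

lemma decrease: "Fv (xk (Suc k)) + L / 2 * ak (Suc k) ^ 2 \<le> Fv (xk k) + L / 2 * (bet k ^ 2 * ak k ^ 2)"
proof -
  define p y z where "p = xk (Suc k)" "y = yk k" "z = xk k"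
  have pT: "p = T y" unfolding p_y_z_def using st_step by simp
  have k: "Fv z - Fv p \<ge> L / 2 * norm (p - y) ^ 2 + L * inner (y - z) (p - y)"
    using key[OF xk_D[of k], of y] unfolding pT Fv_def p_y_z_def by simp
  have "norm (p - y) ^ 2 + 2 * inner (y - z) (p - y) = norm (p - z) ^ 2 - norm (y - z) ^ 2"
    unfolding power2_norm_eq_inner by (simp add: inner_diff_left inner_diff_right inner_commute)
  hence "L / 2 * (norm (p - y) ^ 2 + 2 * inner (y - z) (p - y)) = L / 2 * (norm (p - z) ^ 2 - norm (y - z) ^ 2)"
    by simp
  hence "L / 2 * norm (p - y) ^ 2 + L * inner (y - z) (p - y) = L / 2 * norm (p - z) ^ 2 - L / 2 * norm (y - z) ^ 2"
    by (simp add: algebra_simps)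
  moreover have "norm (p - z) ^ 2 = ak (Suc k) ^ 2" unfolding p_y_z_def ak_Suc ..
  moreover have "norm (y - z) ^ 2 = bet k ^ 2 * ak k ^ 2" unfolding p_y_z_def yx(1) by (simp add: power_mult_distrib)
  ultimately have "L / 2 * norm (p - y) ^ 2 + L * inner (y - z) (p - y) = L / 2 * ak (Suc k) ^ 2 - L / 2 * (bet k ^ 2 * ak k ^ 2)"
    by simp
  thus ?thesis using k unfolding p_y_z_def by argo
qed

end


context fista_opt begin

definition cc where "cc = L / 2 * (1 - bbar ^ 2)"

lemma cc_pos: "cc > 0"
proof -
  have "bbar ^ 2 < 1" using bbar_bounds by (simp add: power_less_one_iff abs_less_iff)
  thus ?thesis unfolding cc_def using L_pos by simp
qed

lemma ek_nonneg: "0 \<le> ek k"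
  unfolding ek_def using Fs_le[OF xk_D[of k]] L_pos by simp

lemma ek_dec: "ek (Suc k) \<le> ek k - cc * ak k ^ 2"
proof -
  have "bet k ^ 2 \<le> bbar ^ 2" using bet_bounds[of k] by (intro power_mono) auto
  hence "L / 2 * (bet k ^ 2 * ak k ^ 2) \<le> L / 2 * (bbar ^ 2 * ak k ^ 2)"
    using L_pos by (intro mult_left_mono mult_right_mono) auto
  moreover have "L / 2 * (bbar ^ 2 * ak k ^ 2) = L / 2 * ak k ^ 2 - cc * ak k ^ 2"
    unfolding cc_def by (simp add: algebra_simps)
  ultimately show ?thesis using decrease[of k] unfolding ek_def by argo
qed

lemma ek_mono: "ek (Suc k) \<le> ek k"
  using ek_dec[of k] cc_pos by (smt (verit) mult_nonneg_nonneg zero_le_power2)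

lemma ek_decseq: "decseq ek"
  using ek_mono by (simp add: decseq_SucI)

lemma ek_le0: "ek k \<le> ek 0"
  using ek_decseq by (simp add: decseq_def)

lemma Fv_le: "Fv (xk k) \<le> Fv x0"
proof -
  have "Fv (xk k) - Fs \<le> ek k" unfolding ek_def using L_pos by simp
  moreover have "ek 0 = Fv x0 - Fs" unfolding ek_def using ak0 st0 by simp
  ultimately show ?thesis using ek_le0[of k] by simp
qed

lemma ak_sq_le: "cc * ak k ^ 2 \<le> ek k - ek (Suc k)"
  using ek_dec[of k] by simp

lemma ak_lim: "ak \<longlonglongrightarrow> 0"
proof -
  obtain l where l: "ek \<longlonglongrightarrow> l" using decseq_convergent[OF ek_decseq, of 0] ek_nonneg by blast
  have d: "(\<lambda>k. (ek k - ek (Suc k)) / cc) \<longlonglongrightarrow> 0"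
    using tendsto_divide[OF tendsto_diff[OF l LIMSEQ_Suc[OF l]] tendsto_const[of cc]] cc_pos by simp
  have "(\<lambda>k. ak k ^ 2) \<longlonglongrightarrow> 0"
  proof (rule tendsto_sandwich[OF _ _ tendsto_const d])
    show "eventually (\<lambda>k. 0 \<le> ak k ^ 2) sequentially" by simp
    show "eventually (\<lambda>k. ak k ^ 2 \<le> (ek k - ek (Suc k)) / cc) sequentially"
      using ak_sq_le cc_pos by (simp add: field_simps mult.commute)
  qed
  hence "(\<lambda>k. sqrt (ak k ^ 2)) \<longlonglongrightarrow> sqrt 0" by (rule tendsto_real_sqrt)
  moreover have "\<And>k. sqrt (ak k ^ 2) = ak k" unfolding ak_def by simp
  ultimately show ?thesis by simp
qed

lemma T_res: "norm (T (xk k) - xk k) \<le> 2 * ak k + ak (Suc k)"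
proof -
  have "norm (T (xk k) - xk k) \<le> norm (T (xk k) - T (yk k)) + norm (T (yk k) - xk k)"
    using norm_triangle_ineq[of "T (xk k) - T (yk k)" "T (yk k) - xk k"] by simp
  also have "norm (T (xk k) - T (yk k)) \<le> 2 * norm (xk k - yk k)" by (rule T_lip)
  also have "norm (xk k - yk k) \<le> ak k" using yx(2)[of k] by (simp add: norm_minus_commute)
  also have "T (yk k) = xk (Suc k)" using st_step by simp
  also have "norm (xk (Suc k) - xk k) = ak (Suc k)" using ak_Suc by simp
  finally show ?thesis by simp
qed

end


context fista_opt begin

lemma ak_nonneg: "0 \<le> ak k" unfolding ak_def by simp

lemma eb_step:
  assumes tau: "\<tau> > 0" and eb: "infdist (xk k) Xs \<le> \<tau> * norm (T (xk k) - xk k)"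
  shows "ek (Suc k) \<le> (2 * L * (1 + 2 * \<tau>) + L) * (ak k ^ 2 + ak (Suc k) ^ 2)"
proof -
  define A B where "A = ak k" "B = ak (Suc k)"
  have A0: "A \<ge> 0" and B0: "B \<ge> 0" unfolding A_B_def by (simp_all add: ak_nonneg)
  have Xne: "Xs \<noteq> {}" using X_ne by auto
  obtain xb where xb: "xb \<in> Xs" "infdist (xk k) Xs = dist (xk k) xb"
    by (rule infdist_attains_inf[OF X_closed Xne])
  have xbD: "xb \<in> D" and xbF: "Fv xb = Fs" using xb(1) X_char by auto
  define p y x where "p = xk (Suc k)" "y = yk k" "x = xk k"
  have pT: "p = T y" unfolding p_y_x_def using st_step by simp
  have d: "norm (x - xb) \<le> \<tau> * (2 * A + B)"
  proof -
    have "norm (x - xb) = infdist (xk k) Xs" using xb(2) unfolding p_y_x_def by (simp add: dist_norm)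
    also have "\<dots> \<le> \<tau> * norm (T (xk k) - xk k)" by (rule eb)
    also have "\<dots> \<le> \<tau> * (2 * A + B)" using T_res[of k] tau unfolding A_B_def by (intro mult_left_mono) auto
    finally show ?thesis .
  qed
  have n1: "norm (y - xb) \<le> A + \<tau> * (2 * A + B)"
  proof -
    have "norm (y - xb) \<le> norm (y - x) + norm (x - xb)"
      using norm_triangle_ineq[of "y - x" "x - xb"] by simp
    moreover have "norm (y - x) \<le> A" unfolding p_y_x_def A_B_def by (rule yx(2))
    ultimately show ?thesis using d by linarith
  qed
  have n2: "norm (p - y) \<le> A + B"
  proof -
    have "norm (p - y) \<le> norm (p - x) + norm (x - y)"
      using norm_triangle_ineq[of "p - x" "x - y"] by simp
    moreover have "norm (p - x) = B" unfolding p_y_x_def A_B_def ak_Suc ..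
    moreover have "norm (x - y) \<le> A" using yx(2)[of k] unfolding p_y_x_def A_B_def by (simp add: norm_minus_commute)
    ultimately show ?thesis by linarith
  qed
  have kk: "Fv xb - Fv p \<ge> L / 2 * norm (p - y) ^ 2 + L * inner (y - xb) (p - y)"
    using key[OF xbD, of y] unfolding pT Fv_def by simp
  have cs: "- inner (y - xb) (p - y) \<le> norm (y - xb) * norm (p - y)"
    using norm_cauchy_schwarz[of "- (y - xb)" "p - y"] by (simp only: inner_minus_left norm_minus_cancel)
  have "L / 2 * norm (p - y) ^ 2 \<ge> 0" using L_pos by simp
  hence "Fv p - Fs \<le> L * (- inner (y - xb) (p - y))" using kk xbF by (simp add: algebra_simps)
  also have "\<dots> \<le> L * (norm (y - xb) * norm (p - y))" using cs L_pos by (intro mult_left_mono) auto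
  also have "norm (y - xb) * norm (p - y) \<le> (A + \<tau> * (2 * A + B)) * (A + B)"
    using n1 n2 A0 B0 tau by (intro mult_mono) auto
  also have "(A + \<tau> * (2 * A + B)) * (A + B) \<le> ((1 + 2 * \<tau>) * (A + B)) * (A + B)"
    using A0 B0 tau by (intro mult_right_mono) (auto simp: algebra_simps)
  also have "((1 + 2 * \<tau>) * (A + B)) * (A + B) \<le> (1 + 2 * \<tau>) * (2 * (A ^ 2 + B ^ 2))"
  proof -
    have "0 \<le> (A - B) * (A - B)" by simp
    hence "(A + B) * (A + B) \<le> 2 * (A ^ 2 + B ^ 2)"
      by (simp add: power2_eq_square algebra_simps)
    thus ?thesis using tau by (simp add: mult.assoc)
  qed
  finally have "Fv p - Fs \<le> L * ((1 + 2 * \<tau>) * (2 * (A ^ 2 + B ^ 2)))" using L_pos by simp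
  moreover have "L / 2 * B ^ 2 \<le> L * (A ^ 2 + B ^ 2)"
  proof -
    have "B ^ 2 / 2 \<le> A ^ 2 + B ^ 2" by (simp add: add_increasing)
    hence "L * (B ^ 2 / 2) \<le> L * (A ^ 2 + B ^ 2)" using L_pos by (intro mult_left_mono) auto
    thus ?thesis by simp
  qed
  ultimately have "Fv p - Fs + L / 2 * B ^ 2 \<le> L * ((1 + 2 * \<tau>) * (2 * (A ^ 2 + B ^ 2))) + L * (A ^ 2 + B ^ 2)"
    by linarith
  also have "\<dots> = (2 * L * (1 + 2 * \<tau>) + L) * (A ^ 2 + B ^ 2)" by (simp add: algebra_simps)
  finally show ?thesis unfolding ek_def A_B_def p_y_x_def .
qed

end


lemma limsup_root_lt1:
  fixes u :: "nat \<Rightarrow> real"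
  assumes u: "\<And>k. k \<ge> N \<Longrightarrow> 0 \<le> u k \<and> u k \<le> M * q ^ k" and q: "0 < q" "q < 1"
  shows "limsup (\<lambda>k. ereal (root k (u k))) < 1"
proof -
  define M' where "M' = max M 1"
  have M': "M' > 0" "M \<le> M'" unfolding M'_def by auto
  have ev: "eventually (\<lambda>k. ereal (root k (u k)) \<le> ereal (root k M' * q)) sequentially"
    unfolding eventually_sequentially
  proof (intro exI allI impI)
    fix k assume k: "max N 1 \<le> k"
    hence k0: "0 < k" "N \<le> k" by auto
    have "u k \<le> M' * q ^ k" using u[OF k0(2)] M' q by (smt (verit) mult_right_mono zero_le_power)
    hence "root k (u k) \<le> root k (M' * q ^ k)" by (rule real_root_le_mono[OF k0(1)])
    also have "\<dots> = root k M' * q" using k0(1) q by (simp add: real_root_mult real_root_power_cancel)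
    finally show "ereal (root k (u k)) \<le> ereal (root k M' * q)" by simp
  qed
  have lim: "(\<lambda>k. ereal (root k M' * q)) \<longlonglongrightarrow> ereal (1 * q)"
    by (intro tendsto_intros LIMSEQ_root_const M')
  have "limsup (\<lambda>k. ereal (root k (u k))) \<le> limsup (\<lambda>k. ereal (root k M' * q))"
    by (rule Limsup_mono[OF ev])
  also have "\<dots> = ereal q" using lim_imp_Limsup[OF trivial_limit_sequentially lim] by simp
  also have "\<dots> < 1" using q by simp
  finally show ?thesis .
qed

context fista_opt begin

lemma contraction:
  assumes tau: "\<tau> > 0" and eb: "\<And>k. k \<ge> N \<Longrightarrow> infdist (xk k) Xs \<le> \<tau> * norm (T (xk k) - xk k)"
    and k: "k \<ge> N"
  shows "ek (Suc (Suc k)) \<le> (2 * L * (1 + 2 * \<tau>) + L) / (cc + (2 * L * (1 + 2 * \<tau>) + L)) * ek k"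
proof -
  define C where "C = 2 * L * (1 + 2 * \<tau>) + L"
  have C0: "C > 0" unfolding C_def using L_pos tau by (simp add: add_pos_pos)
  have s: "ek (Suc k) \<le> C * (ak k ^ 2 + ak (Suc k) ^ 2)" unfolding C_def using eb_step[OF tau eb[OF k]] .
  have "cc * ek (Suc k) \<le> cc * (C * (ak k ^ 2 + ak (Suc k) ^ 2))" using s cc_pos by (intro mult_left_mono) auto
  also have "\<dots> = C * (cc * ak k ^ 2 + cc * ak (Suc k) ^ 2)" by (simp add: algebra_simps)
  also have "\<dots> \<le> C * ((ek k - ek (Suc k)) + (ek (Suc k) - ek (Suc (Suc k))))"
    using ak_sq_le[of k] ak_sq_le[of "Suc k"] C0 by (intro mult_left_mono add_mono) auto
  finally have a: "cc * ek (Suc k) \<le> C * (ek k - ek (Suc (Suc k)))" by simp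
  have "cc * ek (Suc (Suc k)) \<le> cc * ek (Suc k)" using ek_mono cc_pos by (intro mult_left_mono) auto
  with a have "(cc + C) * ek (Suc (Suc k)) \<le> C * ek k" by (simp add: algebra_simps)
  hence "ek (Suc (Suc k)) \<le> C * ek k / (cc + C)" using cc_pos C0 by (simp add: field_simps)
  thus ?thesis unfolding C_def by simp
qed

lemma geo_pairs:
  assumes "0 \<le> \<rho>" "\<And>k. k \<ge> N \<Longrightarrow> ek (Suc (Suc k)) \<le> \<rho> * ek k"
  shows "ek (N + 2 * i) \<le> \<rho> ^ i * ek N \<and> ek (N + 2 * i + 1) \<le> \<rho> ^ i * ek N"
proof (induction i)
  case 0 thus ?case using ek_mono[of N] by simp
next
  case (Suc i)
  have "ek (N + 2 * Suc i) = ek (Suc (Suc (N + 2 * i)))" by simp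
  also have "\<dots> \<le> \<rho> * ek (N + 2 * i)" by (rule assms(2)) simp
  also have "\<dots> \<le> \<rho> * (\<rho> ^ i * ek N)" using Suc assms(1) by (intro mult_left_mono) auto
  finally have 1: "ek (N + 2 * Suc i) \<le> \<rho> ^ Suc i * ek N" by (simp add: mult.assoc)
  have "ek (N + 2 * Suc i + 1) = ek (Suc (Suc (N + 2 * i + 1)))" by simp
  also have "\<dots> \<le> \<rho> * ek (N + 2 * i + 1)" by (rule assms(2)) simp
  also have "\<dots> \<le> \<rho> * (\<rho> ^ i * ek N)" using Suc assms(1) by (intro mult_left_mono) auto
  finally have 2: "ek (N + 2 * Suc i + 1) \<le> \<rho> ^ Suc i * ek N" by (simp add: mult.assoc)
  from 1 2 show ?case by blast
qed

lemma geo_decay: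
  assumes r: "0 < \<rho>" "\<rho> < 1" and c: "\<And>k. k \<ge> N \<Longrightarrow> ek (Suc (Suc k)) \<le> \<rho> * ek k"
  shows "\<exists>M q. 0 < q \<and> q < 1 \<and> (\<forall>k\<ge>N. ek k \<le> M * q ^ k)"
proof -
  define q where "q = sqrt \<rho>"
  have q: "0 < q" "q < 1" "q ^ 2 = \<rho>" unfolding q_def using r by auto
  define M where "M = ek N / q ^ Suc N"
  have "ek k \<le> M * q ^ k" if k: "k \<ge> N" for k
  proof -
    define i where "i = (k - N) div 2"
    have kk: "k = N + 2 * i \<or> k = N + 2 * i + 1" unfolding i_def using k by presburger
    have gp: "ek (N + 2 * i) \<le> \<rho> ^ i * ek N \<and> ek (N + 2 * i + 1) \<le> \<rho> ^ i * ek N"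
      by (rule geo_pairs) (use r c in auto)
    have e1: "ek k \<le> \<rho> ^ i * ek N" using gp kk by auto
    have "q ^ (2 * i + 1) \<le> q ^ (k - N)" using kk q by (intro power_decreasing) auto
    moreover have h1: "q ^ (2 * i) = \<rho> ^ i" using power_mult[of q 2 i] q(3) by simp
    moreover have h2: "q ^ (2 * i + 1) = q ^ (2 * i) * q" by (simp only: Suc_eq_plus1[symmetric] power_Suc2)
    ultimately have "\<rho> ^ i * q \<le> q ^ (k - N)" by (simp add: mult.commute)
    hence "\<rho> ^ i \<le> q ^ (k - N) / q" using q by (simp add: field_simps)
    also have "q ^ (k - N) = q ^ k / q ^ N" using k q by (simp add: power_diff)
    finally have "\<rho> ^ i \<le> q ^ k / q ^ Suc N" by (simp add: field_simps)
    hence "\<rho> ^ i * ek N \<le> q ^ k / q ^ Suc N * ek N" using ek_nonneg by (intro mult_right_mono) auto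
    with e1 show ?thesis unfolding M_def by (simp add: field_simps)
  qed
  with q show ?thesis by blast
qed

end


context fista_opt begin

lemma main_opt:
  assumes EB: "\<exists>\<epsilon>>0. \<exists>\<tau>>0. \<forall>x\<in>D. norm (T x - x) < \<epsilon> \<and> Fv x \<le> Fv x0 \<longrightarrow> infdist x Xs \<le> \<tau> * norm (T x - x)"
  shows "(\<exists>xs\<in>Xs. limsup (\<lambda>k. ereal (root k (norm (xk k - xs)))) < 1)
       \<and> limsup (\<lambda>k. ereal (root k \<bar>Fv (xk k) - Fs\<bar>)) < 1"
proof -
  obtain \<epsilon> \<tau> where e: "\<epsilon> > 0" and tau: "\<tau> > 0"
    and eb: "\<And>x. x \<in> D \<Longrightarrow> norm (T x - x) < \<epsilon> \<Longrightarrow> Fv x \<le> Fv x0 \<Longrightarrow> infdist x Xs \<le> \<tau> * norm (T x - x)"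
    using EB by blast
  have rl: "(\<lambda>k. 2 * ak k + ak (Suc k)) \<longlonglongrightarrow> 0"
    using tendsto_add[OF tendsto_mult[OF tendsto_const[of 2] ak_lim] LIMSEQ_Suc[OF ak_lim]] by simp
  from order_tendstoD(2)[OF rl e] obtain N where N: "\<And>k. k \<ge> N \<Longrightarrow> 2 * ak k + ak (Suc k) < \<epsilon>"
    unfolding eventually_sequentially by blast
  have ebk: "infdist (xk k) Xs \<le> \<tau> * norm (T (xk k) - xk k)" if "k \<ge> N" for k
    using eb[OF xk_D[of k] _ Fv_le[of k]] T_res[of k] N[OF that] by linarith
  have ebk2: "infdist (xk k) Xs \<le> \<tau> * (2 * ak k + ak (Suc k))" if "k \<ge> N" for k
    using ebk[OF that] T_res[of k] tau by (smt (verit) mult_left_mono)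
  define C where "C = 2 * L * (1 + 2 * \<tau>) + L"
  have C0: "C > 0" unfolding C_def using L_pos tau by (simp add: add_pos_pos)
  define \<rho> where "\<rho> = C / (cc + C)"
  have r: "0 < \<rho>" "\<rho> < 1" unfolding \<rho>_def using C0 cc_pos by auto
  have con: "\<And>k. k \<ge> N \<Longrightarrow> ek (Suc (Suc k)) \<le> \<rho> * ek k"
    unfolding \<rho>_def C_def using contraction[OF tau ebk] by blast
  obtain M q where q: "0 < q" "q < 1" and Mq: "\<And>k. k \<ge> N \<Longrightarrow> ek k \<le> M * q ^ k"
    using geo_decay[OF r con] by blast
  have M0: "M \<ge> 0"
  proof -
    have "0 \<le> M * q ^ N" using Mq[of N] ek_nonneg[of N] by simp
    moreover have "q ^ N > 0" using q by simp
    ultimately show ?thesis by (auto simp: zero_le_mult_iff)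
  qed
  have Fpart: "limsup (\<lambda>k. ereal (root k \<bar>Fv (xk k) - Fs\<bar>)) < 1"
  proof (rule limsup_root_lt1[OF _ q])
    fix k assume k: "k \<ge> N"
    have "\<bar>Fv (xk k) - Fs\<bar> = Fv (xk k) - Fs" using Fs_le[OF xk_D[of k]] by simp
    also have "\<dots> \<le> ek k" unfolding ek_def using L_pos by simp
    finally show "0 \<le> \<bar>Fv (xk k) - Fs\<bar> \<and> \<bar>Fv (xk k) - Fs\<bar> \<le> M * q ^ k" using Mq[OF k] by simp
  qed
  define r where "r = sqrt q"
  define B where "B = sqrt (M / cc)"
  have r01: "0 < r" "r < 1" unfolding r_def using q by auto
  have B0: "B \<ge> 0" unfolding B_def using M0 cc_pos by simp
  define d where "d j = xk (Suc j) - xk j" for j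
  have nd: "norm (d j) = ak (Suc j)" for j unfolding d_def ak_Suc ..
  have dbound: "norm (d j) \<le> B * r ^ j" if j: "j \<ge> N" for j
  proof -
    have "cc * ak (Suc j) ^ 2 \<le> ek j" using ak_sq_le[of "Suc j"] ek_nonneg[of "Suc (Suc j)"] ek_mono[of j] by simp
    hence "ak (Suc j) ^ 2 \<le> M / cc * q ^ j" using Mq[OF j] cc_pos by (simp add: field_simps)
    hence "sqrt (ak (Suc j) ^ 2) \<le> sqrt (M / cc * q ^ j)" by (rule real_sqrt_le_mono)
    also have "sqrt (M / cc * q ^ j) = B * r ^ j"
      unfolding B_def r_def by (simp only: real_sqrt_mult real_sqrt_power)
    finally show ?thesis unfolding nd using ak_nonneg by simp
  qed
  have sg: "summable (\<lambda>j. B * r ^ j)" using r01 by (intro summable_mult summable_geometric) auto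
  have snd: "summable (\<lambda>j. norm (d j))"
    by (rule summable_comparison_test'[OF sg, of N]) (use dbound in simp)
  have sd: "summable d" by (rule summable_norm_cancel[OF snd])
  define xinf where "xinf = x0 + suminf d"
  have xk_sum: "xk k = x0 + (\<Sum>j<k. d j)" for k
    unfolding d_def using sum_lessThan_telescope[of xk k] st0 by simp
  have conv: "xk \<longlonglongrightarrow> xinf"
    unfolding xk_sum xinf_def by (intro tendsto_add tendsto_const summable_LIMSEQ sd)
  have tail: "norm (xk k - xinf) \<le> B / (1 - r) * r ^ k" if k: "k \<ge> N" for k
  proof -
    have "xinf - xk k = (\<Sum>j. d (j + k))"
      unfolding xinf_def xk_sum using suminf_minus_initial_segment[OF sd, of k] by simp
    hence "norm (xk k - xinf) = norm (\<Sum>j. d (j + k))" by (simp add: norm_minus_commute)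
    also have "\<dots> \<le> (\<Sum>j. norm (d (j + k)))"
      by (rule summable_norm) (rule summable_ignore_initial_segment[OF snd])
    also have "\<dots> \<le> (\<Sum>j. B * r ^ k * r ^ j)"
    proof (rule suminf_le)
      fix j
      have "norm (d (j + k)) \<le> B * r ^ (j + k)" using dbound k by simp
      thus "norm (d (j + k)) \<le> B * r ^ k * r ^ j" by (simp add: power_add mult.commute mult.left_commute)
    next
      show "summable (\<lambda>j. norm (d (j + k)))" by (rule summable_ignore_initial_segment[OF snd])
      show "summable (\<lambda>j. B * r ^ k * r ^ j)" using r01 by (intro summable_mult summable_geometric) auto
    qed
    also have "\<dots> = B * r ^ k * (1 / (1 - r))" using r01 by (simp add: suminf_mult suminf_geometric)
    finally show ?thesis by simp
  qed
  have Xpart: "limsup (\<lambda>k. ereal (root k (norm (xk k - xinf)))) < 1"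
  proof (rule limsup_root_lt1[where N=N and M="B / (1 - r)", OF _ r01])
    fix k assume "k \<ge> N"
    thus "0 \<le> norm (xk k - xinf) \<and> norm (xk k - xinf) \<le> B / (1 - r) * r ^ k" using tail by simp
  qed
  have "infdist xinf Xs = 0"
  proof -
    have l1: "(\<lambda>k. infdist (xk k) Xs) \<longlonglongrightarrow> infdist xinf Xs" by (intro tendsto_infdist conv)
    have l2: "(\<lambda>k. infdist (xk k) Xs) \<longlonglongrightarrow> 0"
    proof (rule tendsto_sandwich[OF _ _ tendsto_const])
      show "eventually (\<lambda>k. 0 \<le> infdist (xk k) Xs) sequentially" by (simp add: infdist_nonneg)
      show "eventually (\<lambda>k. infdist (xk k) Xs \<le> \<tau> * (2 * ak k + ak (Suc k))) sequentially"
        unfolding eventually_sequentially using ebk2 by blast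
      show "(\<lambda>k. \<tau> * (2 * ak k + ak (Suc k))) \<longlonglongrightarrow> 0" using tendsto_mult[OF tendsto_const[of \<tau>] rl] by simp
    qed
    show ?thesis using LIMSEQ_unique[OF l1 l2] .
  qed
  hence "xinf \<in> closure Xs" using in_closure_iff_infdist_zero[of Xs xinf] X_ne by auto
  hence "xinf \<in> Xs" using X_closed by (simp add: closure_closed)
  with Xpart Fpart show ?thesis by blast
qed

end


theorem corollary3p8:
  fixes f :: "'a::euclidean_space \<Rightarrow> real" and gf :: "'a \<Rightarrow> 'a"
    and g :: "'a \<Rightarrow> ereal" and L :: real and K :: nat and adaptive :: bool and x0 :: 'a
  assumes g: "proper_closed_convex g"
    and f_convex: "convex_on UNIV f"
    and f_grad: "\<And>x. (f has_derivative (\<lambda>h. inner (gf x) h)) (at x)"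
    and L_pos: "L > 0"
    and f_lip: "\<And>x y. norm (gf x - gf y) \<le> L * norm (x - y)"
    and inf_fin: "(INF x. ereal (f x) + g x) > -\<infinity>"
    and attained: "\<exists>xm. \<forall>x. ereal (f xm) + g xm \<le> ereal (f x) + g x"
    and err_bound: "\<And>\<xi>. ereal \<xi> \<ge> (INF x. ereal (f x) + g x) \<Longrightarrow>
        \<exists>\<epsilon>>0. \<exists>\<tau>>0. \<forall>x.
          norm (prox (\<lambda>z. ereal (1 / L) * g z) (x - (1 / L) *\<^sub>R gf x) - x) < \<epsilon>
          \<and> ereal (f x) + g x \<le> ereal \<xi> \<longrightarrow>
          infdist x {z. - gf z \<in> subdiff g z}
            \<le> \<tau> * norm (prox (\<lambda>z. ereal (1 / L) * g z) (x - (1 / L) *\<^sub>R gf x) - x)"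
    and separation: "\<exists>\<delta>>0. \<forall>x\<in>{z. - gf z \<in> subdiff g z}. \<forall>y\<in>{z. - gf z \<in> subdiff g z}.
          ereal (f x) + g x \<noteq> ereal (f y) + g y \<longrightarrow> norm (x - y) \<ge> \<delta>"
    and K_pos: "K > 0"
    and x0_dom: "g x0 \<noteq> \<infinity>"
  shows "(\<exists>xs. (\<forall>x. ereal (f xs) + g xs \<le> ereal (f x) + g x) \<and>
            limsup (\<lambda>k. ereal (root k (norm (fista_x L gf g K adaptive x0 k - xs)))) < 1)
       \<and> (\<forall>k. g (fista_x L gf g K adaptive x0 k) \<noteq> \<infinity>)
       \<and> limsup (\<lambda>k. ereal (root k \<bar>real_of_ereal
            (ereal (f (fista_x L gf g K adaptive x0 k)) + g (fista_x L gf g K adaptive x0 k)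
             - (INF x. ereal (f x) + g x))\<bar>)) < 1"
proof -
  interpret fsetup f gf g L
    using g f_convex f_grad L_pos f_lip by unfold_locales auto
  obtain xm where xm: "\<And>x. ereal (f xm) + g xm \<le> ereal (f x) + g x" using attained by blast
  have gx0: "g x0 = ereal (G x0)" using g_fin x0_dom unfolding D_def by simp
  have xm_dom: "g xm \<noteq> \<infinity>"
  proof
    assume "g xm = \<infinity>"
    with xm[of x0] gx0 show False by simp
  qed
  have xmD: "xm \<in> D" using xm_dom unfolding D_def by simp
  have FD: "\<And>x. x \<in> D \<Longrightarrow> ereal (f x) + g x = ereal (f x + G x)" using g_fin by simp
  have xm_min: "\<And>z. g z \<noteq> \<infinity> \<Longrightarrow> f xm + real_of_ereal (g xm) \<le> f z + real_of_ereal (g z)"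
  proof -
    fix z assume "g z \<noteq> \<infinity>"
    hence zD: "z \<in> D" unfolding D_def by simp
    from xm[of z] FD[OF zD] FD[OF xmD] show "f xm + real_of_ereal (g xm) \<le> f z + real_of_ereal (g z)"
      unfolding G_def by simp
  qed
  interpret fista_opt f gf g L K adaptive x0 xm
    using K_pos x0_dom xm_dom xm_min by unfold_locales auto
  have FvD: "\<And>x. x \<in> D \<Longrightarrow> ereal (f x) + g x = ereal (Fv x)" using FD unfolding Fv_def by simp
  have INF_eq: "(INF x. ereal (f x) + g x) = ereal Fs"
  proof (rule antisym)
    have "(INF x. ereal (f x) + g x) \<le> ereal (f xm) + g xm" by (rule INF_lower) simp
    thus "(INF x. ereal (f x) + g x) \<le> ereal Fs" unfolding Fs_def using FvD[OF xmD] by simp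
    have "ereal (f xm) + g xm \<le> (INF x. ereal (f x) + g x)" by (rule INF_greatest) (rule xm)
    thus "ereal Fs \<le> (INF x. ereal (f x) + g x)" unfolding Fs_def using FvD[OF xmD] by simp
  qed
  have TT: "\<And>x. prox (\<lambda>z. ereal (1 / L) * g z) (x - (1 / L) *\<^sub>R gf x) = T x"
    unfolding T_def h_eq ..
  have x0D: "x0 \<in> D" using x0_dom unfolding D_def by simp
  have EB: "\<exists>\<epsilon>>0. \<exists>\<tau>>0. \<forall>x\<in>D. norm (T x - x) < \<epsilon> \<and> Fv x \<le> Fv x0 \<longrightarrow> infdist x Xs \<le> \<tau> * norm (T x - x)"
  proof -
    have "ereal (Fv x0) \<ge> (INF x. ereal (f x) + g x)" unfolding INF_eq using Fs_le[OF x0D] by simp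
    from err_bound[OF this] obtain \<epsilon> \<tau> where e: "\<epsilon> > 0" "\<tau> > 0" and
      eb: "\<forall>x. norm (T x - x) < \<epsilon> \<and> ereal (f x) + g x \<le> ereal (Fv x0) \<longrightarrow> infdist x Xs \<le> \<tau> * norm (T x - x)"
      unfolding TT Xs_def by blast
    have "\<forall>x\<in>D. norm (T x - x) < \<epsilon> \<and> Fv x \<le> Fv x0 \<longrightarrow> infdist x Xs \<le> \<tau> * norm (T x - x)"
    proof (intro ballI impI)
      fix x assume x: "x \<in> D" and a: "norm (T x - x) < \<epsilon> \<and> Fv x \<le> Fv x0"
      have "ereal (f x) + g x \<le> ereal (Fv x0)" unfolding FvD[OF x] using a by simp
      thus "infdist x Xs \<le> \<tau> * norm (T x - x)" using eb a by blast
    qed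
    with e show ?thesis by blast
  qed
  from main_opt[OF EB] obtain xs where xs: "xs \<in> Xs" "limsup (\<lambda>k. ereal (root k (norm (xk k - xs)))) < 1"
    and Fp: "limsup (\<lambda>k. ereal (root k \<bar>Fv (xk k) - Fs\<bar>)) < 1" by blast
  have xsD: "xs \<in> D" and xsF: "Fv xs = Fs" using xs(1) X_char by auto
  have part1: "\<forall>x. ereal (f xs) + g xs \<le> ereal (f x) + g x"
  proof
    fix x show "ereal (f xs) + g xs \<le> ereal (f x) + g x"
    proof (cases "x \<in> D")
      case True thus ?thesis using FvD[OF xsD] FvD[OF True] xsF Fs_le[OF True] by simp
    next
      case False hence "g x = \<infinity>" unfolding D_def by simp
      thus ?thesis by simp
    qed
  qed
  have eqF: "real_of_ereal (ereal (f (xk k)) + g (xk k) - (INF x. ereal (f x) + g x)) = Fv (xk k) - Fs" for k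
    unfolding INF_eq using FvD[OF xk_D[of k]] by simp
  have gk: "\<forall>k. g (xk k) \<noteq> \<infinity>" using xk_D unfolding D_def by simp
  show ?thesis
    unfolding xk_eq eqF
    using part1 xs(2) Fp gk by blast
qed


end
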